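(* Let $\beta>0$ and $t$ a positive integer. Suppose that for each $k=0,1,\dots,t$ the following hold: $\tilde{\boldsymbol{w}}^k=(\tilde{\boldsymbol{x}}^k,\tilde{\boldsymbol{\lambda}}^k)\in\Omega$ satisfies $f(\boldsymbol{x})-f(\tilde{\boldsymbol{x}}^k)+(\boldsymbol{w}-\tilde{\boldsymbol{w}}^k)^T\boldsymbol{\Gamma}(\tilde{\boldsymbol{w}}^k)\ge(\boldsymbol{w}-\tilde{\boldsymbol{w}}^k)^T\boldsymbol{Q}_k(\boldsymbol{w}^k-\tilde{\boldsymbol{w}}^k)$ for all $\boldsymbol{w}\in\Omega$; $\boldsymbol{M}_k$ is invertible with $\boldsymbol{H}_k=\boldsymbol{Q}_k\boldsymbol{M}_k^{-1}$ symmetric positive definite and $\boldsymbol{G}_k=\boldsymbol{Q}_k^T+\boldsymbol{Q}_k-\beta\boldsymbol{M}_k^T\boldsymbol{H}_k\boldsymbol{M}_k\succ0$; and $\boldsymbol{w}^{k+1}=\boldsymbol{w}^k-\beta\boldsymbol{M}_k(\boldsymbol{w}^k-\tilde{\boldsymbol{w}}^k)$. Suppose also $\boldsymbol{H}_{k-1}-\boldsymbol{H}_k\succeq0$ for $k=1,\dots,t$. Let $\tilde{\boldsymbol{x}}_t=\frac1{1+t}\sum_{k=0}^t\tilde{\boldsymbol{x}}^k$, $\tilde{\boldsymbol{w}}_t=\frac1{1+t}\sum_{k=0}^t\tilde{\boldsymbol{w}}^k$. Then $\tilde{\boldsymbol{w}}_t\in\Omega$ and $$f(\tilde{\boldsymbol{x}}_t)-f(\boldsymbol{x})+(\tilde{\boldsymbol{w}}_t-\boldsymbol{w})^T\boldsymbol{\Gamma}(\boldsymbol{w})\le\frac{1}{2\beta(1+t)}\|\boldsymbol{w}-\boldsymbol{w}^0\|_{\boldsymbol{H}_0}^2\quad\text{for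 all }\boldsymbol{w}=(\boldsymbol{x},\boldsymbol{\lambda})\in\Omega.$$
   Context: $\mathcal{X}\subset\mathbb{R}^n$ nonempty closed convex; $f:\mathbb{R}^n\to\mathbb{R}$ convex; $\phi_1,\dots,\phi_m$ convex and continuously differentiable; $\Phi=(\phi_1,\dots,\phi_m)^T$ with $m\times n$ Jacobian $\mathcal{D}\Phi$; $\Omega=\mathcal{X}\times\mathbb{R}^m_+$; $\boldsymbol{\Gamma}(\boldsymbol{w})=(\mathcal{D}\Phi(\boldsymbol{x})^T\boldsymbol{\lambda},-\Phi(\boldsymbol{x}))$. For $r_k,s_k>0$, $\boldsymbol{Q}_k=\begin{pmatrix} r_k\boldsymbol{I}_n & -\mathcal{D}\Phi(\tilde{\boldsymbol{x}}^k)^T\\ \boldsymbol{0} & s_k\boldsymbol{I}_m\end{pmatrix}$. $\|\boldsymbol{v}\|_{\boldsymbol{H}}^2=\boldsymbol{v}^T\boldsymbol{H}\boldsymbol{v}$. *)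

theory Defs
  imports "HOL-Analysis.Analysis"
begin

text \<open>Vectors w = (x, lambda) in R^(n+m) are indexed by the sum type 'n + 'm.\<close>

definition wjoin :: "real^'n::finite \<Rightarrow> real^'m::finite \<Rightarrow> real^('n + 'm)" where
  "wjoin x l = (\<chi> i. case i of Inl j \<Rightarrow> x $ j | Inr j \<Rightarrow> l $ j)"

definition wx :: "real^('n::finite + 'm::finite) \<Rightarrow> real^'n" where
  "wx w = (\<chi> j. w $ Inl j)"

definition wl :: "real^('n::finite + 'm::finite) \<Rightarrow> real^'m" where
  "wl w = (\<chi> j. w $ Inr j)"

definition Omega :: "(real^'n::finite) set \<Rightarrow> (real^('n + 'm::finite)) set" where
  "Omega X = {w. wx w \<in> X \<and> (\<forall>j. 0 \<le> wl w $ j)}"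

definition Gamma :: "(real^'n::finite \<Rightarrow> real^'m::finite) \<Rightarrow> (real^'n \<Rightarrow> real^'n^'m)
                     \<Rightarrow> real^('n + 'm) \<Rightarrow> real^('n + 'm)" where
  "Gamma Phi DPhi w = wjoin (transpose (DPhi (wx w)) *v wl w) (- Phi (wx w))"

text \<open>Q = [[r I_n, -J^T],[0, s I_m]] with J the m x n Jacobian.\<close>
definition Qmat :: "real \<Rightarrow> real \<Rightarrow> real^'n::finite^'m::finite \<Rightarrow> real^('n + 'm)^('n + 'm)" where
  "Qmat r s J = (\<chi> i k. case (i, k) of
      (Inl a, Inl b) \<Rightarrow> (if a = b then r else 0)
    | (Inl a, Inr b) \<Rightarrow> - (transpose J $ a $ b)
    | (Inr a, Inl b) \<Rightarrow> 0
    | (Inr a, Inr b) \<Rightarrow> (if a = b then s else 0))"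

definition wnorm2 :: "real^'i^'i \<Rightarrow> real^'i \<Rightarrow> real" where
  "wnorm2 H v = v \<bullet> (H *v v)"

definition symmetric_mat :: "real^'i^'i \<Rightarrow> bool" where
  "symmetric_mat A \<longleftrightarrow> transpose A = A"

definition pos_def_mat :: "real^'i^'i \<Rightarrow> bool" where
  "pos_def_mat A \<longleftrightarrow> (\<forall>v. v \<noteq> 0 \<longrightarrow> v \<bullet> (A *v v) > 0)"

definition pos_semidef_mat :: "real^'i^'i \<Rightarrow> bool" where
  "pos_semidef_mat A \<longleftrightarrow> (\<forall>v. v \<bullet> (A *v v) \<ge> 0)"

end

theory Submission
  imports Defs
begin

lemma grad_ineq:
  fixes g :: "'a::real_normed_vector \<Rightarrow> real"
  assumes cv: "convex_on UNIV g" and d: "(g has_derivative g') (at x)"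
  shows "g y \<ge> g x + g' (y - x)"
proof -
  define h where "h = (\<lambda>u::real. g (x + u *\<^sub>R (y - x)))"
  have hc: "convex_on UNIV h"
    unfolding convex_on_def h_def
  proof (intro conjI ballI allI impI, simp)
    fix a b u v :: real assume t: "0 \<le> u" "0 \<le> v" "u + v = 1"
    have "x + (u *\<^sub>R a + v *\<^sub>R b) *\<^sub>R (y - x) = u *\<^sub>R (x + a *\<^sub>R (y - x)) + v *\<^sub>R (x + b *\<^sub>R (y - x))"
      using t(3) by (simp add: algebra_simps) (metis add.commute scaleR_add_left scaleR_one)
    then show "g (x + (u *\<^sub>R a + v *\<^sub>R b) *\<^sub>R (y - x)) \<le> u * g (x + a *\<^sub>R (y - x)) + v * g (x + b *\<^sub>R (y - x))"
      using cv t unfolding convex_on_def by simp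
  qed
  have bl: "bounded_linear g'" using d has_derivative_bounded_linear by blast
  have d1: "((\<lambda>u::real. x + u *\<^sub>R (y - x)) has_derivative (\<lambda>u. u *\<^sub>R (y - x))) (at 0)"
    by (auto intro!: derivative_eq_intros)
  have d2: "(g has_derivative g') (at (x + 0 *\<^sub>R (y - x)))" using d by simp
  have "(h has_derivative (\<lambda>u. g' (u *\<^sub>R (y - x)))) (at 0)"
    unfolding h_def using has_derivative_compose[OF d1 d2] by (simp add: o_def)
  moreover have "(\<lambda>u. g' (u *\<^sub>R (y - x))) = (\<lambda>u. g' (y - x) * u)"
    using linear_scale[OF bounded_linear.linear[OF bl]] by (auto simp: mult.commute)
  ultimately have "(h has_field_derivative g' (y - x)) (at 0 within UNIV)"
    by (simp add: has_field_derivative_def mult.commute[of _ "g' (y - x)"])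
  from convex_on_imp_above_tangent[OF hc _ _ _ this, of 1]
  have "h 1 - h 0 \<ge> g' (y - x) * (1 - 0)" by simp
  then show ?thesis by (simp add: h_def)
qed


lemma wx_wjoin[simp]: "wx (wjoin x l) = x" by (simp add: wx_def wjoin_def)
lemma wl_wjoin[simp]: "wl (wjoin x l) = l" by (simp add: wl_def wjoin_def)
lemma wx_add[simp]: "wx (a + b) = wx a + wx b" by (simp add: wx_def vec_eq_iff)
lemma wl_add[simp]: "wl (a + b) = wl a + wl b" by (simp add: wl_def vec_eq_iff)
lemma wx_diff[simp]: "wx (a - b) = wx a - wx b" by (simp add: wx_def vec_eq_iff)
lemma wl_diff[simp]: "wl (a - b) = wl a - wl b" by (simp add: wl_def vec_eq_iff)
lemma wx_scale[simp]: "wx (c *\<^sub>R a) = c *\<^sub>R wx a" by (simp add: wx_def vec_eq_iff)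
lemma wl_scale[simp]: "wl (c *\<^sub>R a) = c *\<^sub>R wl a" by (simp add: wl_def vec_eq_iff)
lemma wx_sum: "wx (sum g A) = sum (\<lambda>k. wx (g k)) A"
  by (induction A rule: infinite_finite_induct) (auto simp: wx_def vec_eq_iff)
lemma wl_sum: "wl (sum g A) = sum (\<lambda>k. wl (g k)) A"
  by (induction A rule: infinite_finite_induct) (auto simp: wl_def vec_eq_iff)

lemma inner_split: "(u::real^('n::finite + 'm::finite)) \<bullet> v = wx u \<bullet> wx v + wl u \<bullet> wl v"
proof -
  have "u \<bullet> v = (\<Sum>i\<in>UNIV <+> UNIV. u $ i * v $ i)" by (simp add: inner_vec_def)
  also have "\<dots> = (\<Sum>j\<in>UNIV. u $ Inl j * v $ Inl j) + (\<Sum>j\<in>UNIV. u $ Inr j * v $ Inr j)"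
    by (subst sum.Plus) (auto simp: o_def)
  finally show ?thesis by (simp add: inner_vec_def wx_def wl_def)
qed

lemma Gamma_x[simp]: "wx (Gamma Phi DPhi w) = transpose (DPhi (wx w)) *v wl w"
  by (simp add: Gamma_def del: transpose_matrix_vector)
lemma Gamma_l[simp]: "wl (Gamma Phi DPhi w) = - Phi (wx w)"
  by (simp add: Gamma_def)

lemma comp_grad:
  fixes Phi :: "real^'n::finite \<Rightarrow> real^'m::finite"
  assumes Phi_convex: "\<And>i. convex_on UNIV (\<lambda>x. Phi x $ i)"
    and Phi_deriv: "\<And>x. (Phi has_derivative (\<lambda>h. DPhi x *v h)) (at x)"
  shows "Phi y $ i \<ge> Phi x $ i + (DPhi x *v (y - x)) $ i"
proof -
  have "((\<lambda>x. Phi x $ i) has_derivative (\<lambda>h. (DPhi x *v h) $ i)) (at x)"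
    using bounded_linear.has_derivative[OF bounded_linear_vec_nth Phi_deriv] .
  from grad_ineq[OF Phi_convex this] show ?thesis .
qed

lemma sum_nonneg_inner:
  fixes a b :: "real^'m::finite"
  assumes "\<And>j. 0 \<le> a $ j" "\<And>j. 0 \<le> b $ j" shows "0 \<le> a \<bullet> b"
  unfolding inner_vec_def using assms by (auto intro!: sum_nonneg)

lemma gamma_mono:
  fixes Phi :: "real^'n::finite \<Rightarrow> real^'m::finite"
  assumes Phi_convex: "\<And>i. convex_on UNIV (\<lambda>x. Phi x $ i)"
    and Phi_deriv: "\<And>x. (Phi has_derivative (\<lambda>h. DPhi x *v h)) (at x)"
    and l: "\<And>j. 0 \<le> l $ j" and m: "\<And>j. 0 \<le> m $ j"
  shows "0 \<le> (wjoin x l - wjoin y m) \<bullet> (Gamma Phi DPhi (wjoin x l) - Gamma Phi DPhi (wjoin y m))"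
proof -
  have e1: "(x - y) \<bullet> (transpose A *v c) = c \<bullet> (A *v (x - y))" for A :: "real^'n^'m" and c
    by (simp add: inner_commute dot_lmul_matrix)
  have "(wjoin x l - wjoin y m) \<bullet> (Gamma Phi DPhi (wjoin x l) - Gamma Phi DPhi (wjoin y m))
     = (x - y) \<bullet> (transpose (DPhi x) *v l) - (x - y) \<bullet> (transpose (DPhi y) *v m) + (l - m) \<bullet> (Phi y - Phi x)"
    by (subst inner_split) (simp add: inner_diff_right inner_diff_left algebra_simps del: transpose_matrix_vector)
  also have "\<dots> = l \<bullet> (DPhi x *v (x - y) + Phi y - Phi x) + m \<bullet> (Phi x - Phi y - DPhi y *v (x - y))"
    unfolding e1 by (simp add: algebra_simps inner_diff_right inner_add_right inner_diff_left)
  also have "\<dots> \<ge> 0"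
  proof (rule add_nonneg_nonneg)
    show "0 \<le> l \<bullet> (DPhi x *v (x - y) + Phi y - Phi x)"
      using l comp_grad[OF Phi_convex Phi_deriv, where y=y and x=x]
      by (intro sum_nonneg_inner) (auto simp: algebra_simps matrix_vector_mult_diff_distrib)
    show "0 \<le> m \<bullet> (Phi x - Phi y - DPhi y *v (x - y))"
      using m comp_grad[OF Phi_convex Phi_deriv, where y=x and x=y]
      by (intro sum_nonneg_inner) (auto simp: algebra_simps)
  qed
  finally show ?thesis .
qed


lemma sym_inner:
  fixes H :: "real^'i::finite^'i"
  assumes "symmetric_mat H" shows "x \<bullet> (H *v y) = y \<bullet> (H *v x)"
proof -
  have "x \<bullet> (H *v y) = (x v* H) \<bullet> y" by (simp add: dot_lmul_matrix)
  also have "x v* H = transpose H *v x" by simp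
  also have "\<dots> = H *v x" using assms by (simp add: symmetric_mat_def del: transpose_matrix_vector)
  finally show ?thesis by (simp add: inner_commute)
qed

lemma transp_inner:
  fixes Q :: "real^'i::finite^'j::finite"
  shows "x \<bullet> (transpose Q *v y) = (Q *v x) \<bullet> y"
proof -
  have "x \<bullet> (transpose Q *v y) = (transpose Q *v y) \<bullet> x" by (simp add: inner_commute)
  also have "\<dots> = (y v* Q) \<bullet> x" by simp
  also have "\<dots> = y \<bullet> (Q *v x)" by (simp add: dot_lmul_matrix)
  finally show ?thesis by (simp add: inner_commute)
qed

lemma step_ineq:
  fixes H M G Q :: "real^'i::finite^'i"
  assumes beta: "beta > 0" and Hs: "symmetric_mat H" and QHM: "Q = H ** M"
    and G: "G = transpose Q + Q - beta *\<^sub>R (transpose M ** H ** M)"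
    and Gp: "pos_def_mat G"
    and w1: "w1 = w0 - beta *\<^sub>R (M *v (w0 - wt))"
  shows "- ((a - wt) \<bullet> (Q *v (w0 - wt))) \<le> 1 / (2 * beta) * (wnorm2 H (a - w0) - wnorm2 H (a - w1))"
proof -
  define v where "v = w0 - wt"
  define u where "u = M *v v"
  define b where "b = a - w0"
  have awt: "a - wt = b + v" by (simp add: b_def v_def)
  have aw1: "a - w1 = b + beta *\<^sub>R u" by (simp add: b_def u_def v_def w1)
  have Qv: "Q *v v = H *v u" by (simp add: QHM u_def matrix_vector_mul_assoc)
  have Gnn: "0 \<le> v \<bullet> (G *v v)" using Gp unfolding pos_def_mat_def
    by (cases "v = 0") (auto intro: less_imp_le)
  have "v \<bullet> (G *v v) = v \<bullet> (transpose Q *v v) + v \<bullet> (Q *v v) - beta * (v \<bullet> ((transpose M ** H ** M) *v v))"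
    by (simp add: G matrix_vector_mult_diff_rdistrib matrix_vector_mult_add_rdistrib inner_diff_right inner_add_right scaleR_matrix_vector_assoc[symmetric]
          del: transpose_matrix_vector)
  also have "v \<bullet> (transpose Q *v v) = v \<bullet> (Q *v v)" by (simp add: transp_inner inner_commute del: transpose_matrix_vector)
  also have "v \<bullet> ((transpose M ** H ** M) *v v) = u \<bullet> (H *v u)"
    by (simp add: u_def transp_inner matrix_vector_mul_assoc[symmetric] del: transpose_matrix_vector)
  finally have Gv: "v \<bullet> (G *v v) = 2 * (v \<bullet> (H *v u)) - beta * (u \<bullet> (H *v u))" using Qv by simp
  have e1: "wnorm2 H (a - w1) = b \<bullet> (H *v b) + 2 * beta * (b \<bullet> (H *v u)) + beta^2 * (u \<bullet> (H *v u))"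
    unfolding wnorm2_def aw1 using sym_inner[OF Hs, of u b]
    by (simp add: matrix_vector_right_distrib inner_add_left inner_add_right power2_eq_square algebra_simps)
  have e2: "(a - wt) \<bullet> (Q *v (w0 - wt)) = b \<bullet> (H *v u) + v \<bullet> (H *v u)"
    unfolding awt v_def[symmetric] Qv by (simp add: inner_add_left)
  have "1 / (2 * beta) * (wnorm2 H (a - w0) - wnorm2 H (a - w1))
      = - (b \<bullet> (H *v u)) - beta / 2 * (u \<bullet> (H *v u))"
    unfolding e1 using beta by (simp add: wnorm2_def b_def[symmetric] field_simps power2_eq_square)
  moreover have "beta / 2 * (u \<bullet> (H *v u)) \<le> v \<bullet> (H *v u)" using Gnn Gv by simp
  ultimately show ?thesis unfolding e2 by linarith
qed


lemma matrix_inv_left: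
  fixes A :: "real^'n::finite^'n"
  assumes "invertible A" shows "matrix_inv A ** A = mat 1"
proof -
  have "\<exists>A'. A ** A' = mat 1 \<and> A' ** A = mat 1" using assms by (simp add: invertible_def)
  from someI_ex[OF this] show ?thesis by (simp add: matrix_inv_def)
qed

lemma wnorm2_diff: "wnorm2 (A - B) z = wnorm2 A z - wnorm2 B z"
  by (simp add: wnorm2_def matrix_vector_mult_diff_rdistrib inner_diff_right)

lemma wnorm2_nonneg: "pos_def_mat A \<Longrightarrow> 0 \<le> wnorm2 A z"
  unfolding pos_def_mat_def wnorm2_def by (cases "z = 0") (auto intro: less_imp_le)


theorem theorem5:
  fixes X :: "(real^'n) set"
    and f :: "real^'n \<Rightarrow> real"
    and Phi :: "real^'n \<Rightarrow> real^'m"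
    and DPhi :: "real^'n \<Rightarrow> real^'n^'m"
    and beta :: real and t :: nat
    and r s :: "nat \<Rightarrow> real"
    and xt :: "nat \<Rightarrow> real^'n" and lt :: "nat \<Rightarrow> real^'m"
    and w :: "nat \<Rightarrow> real^('n + 'm)"
    and M :: "nat \<Rightarrow> real^('n + 'm)^('n + 'm)"
    and Q H G :: "nat \<Rightarrow> real^('n + 'm)^('n + 'm)"
  assumes X_ne: "X \<noteq> {}" and X_closed: "closed X" and X_convex: "convex X"
    and f_convex: "convex_on UNIV f"
    and Phi_convex: "\<And>i. convex_on UNIV (\<lambda>x. Phi x $ i)"
    and Phi_deriv: "\<And>x. (Phi has_derivative (\<lambda>h. DPhi x *v h)) (at x)"
    and DPhi_cont: "continuous_on UNIV DPhi"
    and beta_pos: "beta > 0" and t_pos: "t \<ge> 1"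
    and rs_pos: "\<And>k. k \<le> t \<Longrightarrow> r k > 0 \<and> s k > 0"
    and Q_def: "\<And>k. Q k = Qmat (r k) (s k) (DPhi (xt k))"
    and in_Omega: "\<And>k. k \<le> t \<Longrightarrow> wjoin (xt k) (lt k) \<in> Omega X"
    and VI: "\<And>k x l. k \<le> t \<Longrightarrow> wjoin x l \<in> Omega X \<Longrightarrow>
        f x - f (xt k) + (wjoin x l - wjoin (xt k) (lt k)) \<bullet> Gamma Phi DPhi (wjoin (xt k) (lt k))
        \<ge> (wjoin x l - wjoin (xt k) (lt k)) \<bullet> (Q k *v (w k - wjoin (xt k) (lt k)))"
    and M_inv: "\<And>k. k \<le> t \<Longrightarrow> invertible (M k)"
    and H_def: "\<And>k. H k = Q k ** matrix_inv (M k)"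
    and H_sym: "\<And>k. k \<le> t \<Longrightarrow> symmetric_mat (H k)"
    and H_pd: "\<And>k. k \<le> t \<Longrightarrow> pos_def_mat (H k)"
    and G_def: "\<And>k. G k = transpose (Q k) + Q k - beta *\<^sub>R (transpose (M k) ** H k ** M k)"
    and G_pd: "\<And>k. k \<le> t \<Longrightarrow> pos_def_mat (G k)"
    and w_step: "\<And>k. k \<le> t \<Longrightarrow> w (Suc k) = w k - beta *\<^sub>R (M k *v (w k - wjoin (xt k) (lt k)))"
    and H_mono: "\<And>k. 1 \<le> k \<Longrightarrow> k \<le> t \<Longrightarrow> pos_semidef_mat (H (k - 1) - H k)"
  shows "(1 / (1 + real t)) *\<^sub>R (\<Sum>k\<le>t. wjoin (xt k) (lt k)) \<in> Omega X
    \<and> (\<forall>x l. wjoin x l \<in> Omega X \<longrightarrow>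
        f ((1 / (1 + real t)) *\<^sub>R (\<Sum>k\<le>t. xt k)) - f x
        + ((1 / (1 + real t)) *\<^sub>R (\<Sum>k\<le>t. wjoin (xt k) (lt k)) - wjoin x l)
            \<bullet> Gamma Phi DPhi (wjoin x l)
        \<le> 1 / (2 * beta * (1 + real t)) * wnorm2 (H 0) (wjoin x l - w 0))"
  proof (intro conjI allI impI)
  define c where "c = 1 / (1 + real t)"
  have c_pos: "c > 0" by (simp add: c_def)
  have c_sum: "(\<Sum>k\<le>t. c) = 1" by (simp add: c_def)
  have xtX: "xt k \<in> X" and ltn: "0 \<le> lt k $ j" if "k \<le> t" for k j
    using in_Omega[OF that] by (auto simp: Omega_def)
  show "(1 / (1 + real t)) *\<^sub>R (\<Sum>k\<le>t. wjoin (xt k) (lt k)) \<in> Omega X"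
  proof -
    have "(\<Sum>k\<le>t. c *\<^sub>R xt k) \<in> X"
      by (rule convex_sum[OF _ X_convex c_sum]) (auto simp: xtX less_imp_le[OF c_pos])
    moreover have "0 \<le> c * (\<Sum>k\<le>t. lt k $ j)" for j
      using c_pos ltn by (auto intro!: sum_nonneg mult_nonneg_nonneg)
    ultimately show ?thesis
      by (simp add: Omega_def wx_sum wl_sum c_def[symmetric] scaleR_sum_right sum_distrib_left)
  qed
  fix x :: "real^'n" and l :: "real^'m" assume wO: "wjoin x l \<in> Omega X"
  define W where "W = wjoin x l"
  define wt where "wt k = wjoin (xt k) (lt k)" for k
  define Gm where "Gm = Gamma Phi DPhi W"
  define D where "D i j = wnorm2 (H i) (W - w j)" for i j
  have lnn: "0 \<le> l $ j" for j using wO by (auto simp: Omega_def)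
  have perk: "f (xt k) - f x + (wt k - W) \<bullet> Gm \<le> 1 / (2 * beta) * (D k k - D k (Suc k))"
    if k: "k \<le> t" for k
  proof -
    have mono: "0 \<le> (W - wt k) \<bullet> (Gm - Gamma Phi DPhi (wt k))"
      unfolding W_def wt_def Gm_def
      by (rule gamma_mono[OF Phi_convex Phi_deriv lnn ltn[OF k]])
    have vi: "f x - f (xt k) + (W - wt k) \<bullet> Gamma Phi DPhi (wt k) \<ge> (W - wt k) \<bullet> (Q k *v (w k - wt k))"
      using VI[OF k wO] unfolding W_def wt_def .
    have QHM: "Q k = H k ** M k"
      by (simp add: H_def matrix_mul_assoc[symmetric] matrix_inv_left[OF M_inv[OF k]])
    have st: "- ((W - wt k) \<bullet> (Q k *v (w k - wt k))) \<le> 1 / (2 * beta) * (D k k - D k (Suc k))"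
      unfolding D_def
      by (rule step_ineq[OF beta_pos H_sym[OF k] QHM G_def G_pd[OF k]]) (simp add: w_step[OF k] wt_def)
    have "(wt k - W) \<bullet> Gm = - ((W - wt k) \<bullet> Gm)" by (simp add: inner_diff_left)
    with mono vi st show ?thesis by (simp add: inner_diff_right)
  qed
  have tele: "n \<le> t \<Longrightarrow> (\<Sum>k\<le>n. D k k - D k (Suc k)) \<le> D 0 0 - D n (Suc n)" for n
  proof (induction n)
    case 0 then show ?case by simp
  next
    case (Suc n)
    have "D (Suc n) (Suc n) \<le> D n (Suc n)"
    proof -
      have "0 \<le> wnorm2 (H n - H (Suc n)) (W - w (Suc n))"
        using H_mono[of "Suc n"] Suc.prems unfolding pos_semidef_mat_def wnorm2_def by simp
      then show ?thesis unfolding D_def wnorm2_diff by simp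
    qed
    with Suc show ?case by simp
  qed
  have tsum: "(\<Sum>k\<le>t. D k k - D k (Suc k)) \<le> D 0 0"
    using tele[of t] wnorm2_nonneg[OF H_pd[of t], of "W - w (Suc t)"] by (simp add: D_def)
  have jensen: "f (\<Sum>k\<le>t. c *\<^sub>R xt k) \<le> (\<Sum>k\<le>t. c * f (xt k))"
    by (rule convex_on_sum[OF _ _ f_convex c_sum]) (auto simp: less_imp_le[OF c_pos])
  have inner_eq: "(c *\<^sub>R (\<Sum>k\<le>t. wt k) - W) \<bullet> Gm = c * (\<Sum>k\<le>t. (wt k - W) \<bullet> Gm)"
  proof -
    have "(\<Sum>k\<le>t. (wt k - W) \<bullet> Gm) = (\<Sum>k\<le>t. wt k) \<bullet> Gm - (1 + real t) * (W \<bullet> Gm)"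
      by (simp add: inner_diff_left sum_subtractf inner_sum_left)
    then show ?thesis using c_pos by (simp add: c_def inner_diff_left field_simps)
  qed
  have "f (c *\<^sub>R (\<Sum>k\<le>t. xt k)) - f x + (c *\<^sub>R (\<Sum>k\<le>t. wt k) - W) \<bullet> Gm
     \<le> c * (\<Sum>k\<le>t. f (xt k) - f x + (wt k - W) \<bullet> Gm)"
  proof -
    have e: "c * (\<Sum>k\<le>t. f (xt k) - f x + (wt k - W) \<bullet> Gm)
      = (\<Sum>k\<le>t. c * f (xt k)) - f x + c * (\<Sum>k\<le>t. (wt k - W) \<bullet> Gm)"
    proof -
      have "c * (\<Sum>k\<le>t. f (xt k) - f x + (wt k - W) \<bullet> Gm)
        = c * (\<Sum>k\<le>t. f (xt k)) - c * (1 + real t) * f x + c * (\<Sum>k\<le>t. (wt k - W) \<bullet> Gm)"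
        by (simp add: sum.distrib sum_subtractf algebra_simps)
      also have "c * (1 + real t) = 1" by (simp add: c_def)
      finally show ?thesis by (simp add: sum_distrib_left)
    qed
    show ?thesis unfolding e inner_eq using jensen by (simp add: scaleR_sum_right)
  qed
  also have "\<dots> \<le> c * (\<Sum>k\<le>t. 1 / (2 * beta) * (D k k - D k (Suc k)))"
    using c_pos perk by (intro mult_left_mono sum_mono) auto
  also have "\<dots> = c * (1 / (2 * beta)) * (\<Sum>k\<le>t. D k k - D k (Suc k))"
    by (simp add: sum_distrib_left)
  also have "\<dots> \<le> c * (1 / (2 * beta)) * D 0 0"
    using tsum c_pos beta_pos by (intro mult_left_mono) auto
  finally show "f ((1 / (1 + real t)) *\<^sub>R (\<Sum>k\<le>t. xt k)) - f x
        + ((1 / (1 + real t)) *\<^sub>R (\<Sum>k\<le>t. wjoin (xt k) (lt k)) - wjoin x l)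
            \<bullet> Gamma Phi DPhi (wjoin x l)
        \<le> 1 / (2 * beta * (1 + real t)) * wnorm2 (H 0) (wjoin x l - w 0)"
    by (simp add: c_def D_def W_def wt_def Gm_def mult.commute)
qed

end
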